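(* Let $\mathcal{G}=(\mathcal{V},\mathcal{E})$ be a DAG with treatment $A$ and outcome $Y$ as in the context, and $\mathcal{G}'=\mathcal{G}\setminus(A\to Y)$. Let $I\subseteq\mathcal{I}$ be a set of irrelevant variables, $Z\subseteq\mathcal{V}\setminus\{A,Y\}$, and $U\subseteq\mathcal{W}$ a set of extended confounding variables such that $Z\cup I\cup U$ is $(Z\cup I)$-irreducible for estimating $\tau$. Then in $\mathcal{G}'$: (i) $A\perp_{\mathcal{G}'}Y\mid Z\cup I\cup U$; (ii) $A\perp_{\mathcal{G}'}Y\mid Z\cup U$; hence $Z\cup I\cup U$ and $Z\cup U$ are valid adjustment sets. In $\mathcal{G}$: (a) $I\perp_{\mathcal{G}}Y\mid A\cup Z\cup U$; (b) $I\perp_{\mathcal{G}}U\mid Z$.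
   Context: $\mathcal{G}=(\mathcal{V},\mathcal{E})$ is a DAG containing treatment $A$ and outcome $Y$ with an edge $A\to Y$; variables follow a linear Gaussian SEM Markov and faithful to $\mathcal{G}$; no variable of $\mathcal{V}\setminus\{A,Y\}$ is a descendant of $A$. $\perp_{\mathcal{H}}$ denotes d-separation in graph $\mathcal{H}$. $\tau=\frac{\partial}{\partial a}E\{Y\mid do(A=a)\}$. A set $Z\subseteq\mathcal{V}\setminus\{A,Y\}$ is a valid adjustment set if the OLS estimator of the $A$-coefficient when regressing $Y$ on $A$ and $Z$ is unbiased for $\tau$ for every distribution Markov to $\mathcal{G}$ (equivalently here, $A\perp_{\mathcal{G}'}Y\mid Z$). For $K\subseteq Z$, a valid set $Z$ is $K$-irreducible if no proper subset $Z'\subsetneq Z$ with $K\subseteq Z'$ is valid. Irrelevant variables $\mathcal{I}$: $V\in\mathcal{V}\setminus\{A,Y\}$ such that in $\mathcal{G}'$, $V$ is d-separated from $Y$ given every $K\subseteq\mathcal{V}\setminus\{A,Y\}$. Extended confounding variables $\mathcal{W}$: $V\in\mathcal{V}\setminus\{A,Y\}$ d-connected in $\mathcal{G}'$ to $A$ given some $K\subseteq\mathcal{V}\setminus\{A,Y\}$ and to $Y$ given some $L\subseteq\mathcal{V}\setminus\{A,Y\}$. *)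

theory Defs
  imports Main
begin

definition dag :: "'v set \<Rightarrow> ('v \<times> 'v) set \<Rightarrow> bool" where
  "dag V E \<longleftrightarrow> finite V \<and> E \<subseteq> V \<times> V \<and> acyclic E"

definition adjacent :: "('v \<times> 'v) set \<Rightarrow> 'v \<Rightarrow> 'v \<Rightarrow> bool" where
  "adjacent E u v \<longleftrightarrow> (u, v) \<in> E \<or> (v, u) \<in> E"

definition is_path :: "'v set \<Rightarrow> ('v \<times> 'v) set \<Rightarrow> 'v list \<Rightarrow> bool" where
  "is_path V E p \<longleftrightarrow> p \<noteq> [] \<and> distinct p \<and> set p \<subseteq> V \<and>
     (\<forall>i. Suc i < length p \<longrightarrow> adjacent E (p ! i) (p ! Suc i))"

definition descendants :: "('v \<times> 'v) set \<Rightarrow> 'v \<Rightarrow> 'v set" where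
  "descendants E v = {w. (v, w) \<in> E\<^sup>*}"

definition collider :: "('v \<times> 'v) set \<Rightarrow> 'v list \<Rightarrow> nat \<Rightarrow> bool" where
  "collider E p i \<longleftrightarrow> (p ! (i - 1), p ! i) \<in> E \<and> (p ! Suc i, p ! i) \<in> E"

definition active_path :: "('v \<times> 'v) set \<Rightarrow> 'v set \<Rightarrow> 'v list \<Rightarrow> bool" where
  "active_path E Z p \<longleftrightarrow>
     (\<forall>i. 0 < i \<and> Suc i < length p \<longrightarrow>
        (if collider E p i then descendants E (p ! i) \<inter> Z \<noteq> {} else p ! i \<notin> Z))"

definition d_sep :: "'v set \<Rightarrow> ('v \<times> 'v) set \<Rightarrow> 'v set \<Rightarrow> 'v set \<Rightarrow> 'v set \<Rightarrow> bool" where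
  "d_sep V E X Y Z \<longleftrightarrow>
     \<not> (\<exists>p. is_path V E p \<and> hd p \<in> X \<and> last p \<in> Y \<and> active_path E Z p)"

definition edges' :: "('v \<times> 'v) set \<Rightarrow> 'v \<Rightarrow> 'v \<Rightarrow> ('v \<times> 'v) set" where
  "edges' E A Y = E - {(A, Y)}"

definition valid_adj :: "'v set \<Rightarrow> ('v \<times> 'v) set \<Rightarrow> 'v \<Rightarrow> 'v \<Rightarrow> 'v set \<Rightarrow> bool" where
  "valid_adj V E A Y Z \<longleftrightarrow> Z \<subseteq> V - {A, Y} \<and> d_sep V (edges' E A Y) {A} {Y} Z"

definition irreducible :: "'v set \<Rightarrow> ('v \<times> 'v) set \<Rightarrow> 'v \<Rightarrow> 'v \<Rightarrow> 'v set \<Rightarrow> 'v set \<Rightarrow> bool" where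
  "irreducible V E A Y K Z \<longleftrightarrow> K \<subseteq> Z \<and> valid_adj V E A Y Z \<and>
     (\<forall>Z'. K \<subseteq> Z' \<and> Z' \<subset> Z \<longrightarrow> \<not> valid_adj V E A Y Z')"

definition irrelevant_vars :: "'v set \<Rightarrow> ('v \<times> 'v) set \<Rightarrow> 'v \<Rightarrow> 'v \<Rightarrow> 'v set" where
  "irrelevant_vars V E A Y = {v \<in> V - {A, Y}.
     \<forall>K. K \<subseteq> V - {A, Y} \<longrightarrow> d_sep V (edges' E A Y) {v} {Y} K}"

definition ext_confounding_vars :: "'v set \<Rightarrow> ('v \<times> 'v) set \<Rightarrow> 'v \<Rightarrow> 'v \<Rightarrow> 'v set" where
  "ext_confounding_vars V E A Y = {v \<in> V - {A, Y}.
     (\<exists>K. K \<subseteq> V - {A, Y} \<and> \<not> d_sep V (edges' E A Y) {v} {A} K) \<and>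
     (\<exists>L. L \<subseteq> V - {A, Y} \<and> \<not> d_sep V (edges' E A Y) {v} {Y} L)}"

end

theory Submission
  imports Defs
begin


lemma is_path_drop:
  assumes "is_path V E p" "k < length p"
  shows "is_path V E (drop k p)"
  using assms unfolding is_path_def
proof (intro conjI allI impI)
  fix i assume h: "p \<noteq> [] \<and> distinct p \<and> set p \<subseteq> V \<and> (\<forall>i. Suc i < length p \<longrightarrow> adjacent E (p ! i) (p ! Suc i))"
    "k < length p" "Suc i < length (drop k p)"
  then have "adjacent E (p ! (k+i)) (p ! Suc (k+i))" by auto
  then show "adjacent E (drop k p ! i) (drop k p ! Suc i)" using h by simp
qed (auto dest: set_drop_subset[THEN subsetD])

lemma collider_drop:
  assumes "0 < i" "Suc (k+i) < length p"
  shows "collider E (drop k p) i = collider E p (k+i)"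
proof -
  have "drop k p ! (i - 1) = p ! (k + i - 1)" using assms by simp
  moreover have "drop k p ! i = p ! (k+i)" using assms by simp
  moreover have "drop k p ! Suc i = p ! Suc (k+i)" using assms by simp
  ultimately show ?thesis unfolding collider_def by simp
qed

lemma active_drop:
  assumes "\<forall>s. k < s \<and> Suc s < length p \<longrightarrow> (if collider E p s then descendants E (p!s) \<inter> K \<noteq> {} else p!s \<notin> K)"
    "k < length p"
  shows "active_path E K (drop k p)"
  unfolding active_path_def
proof (intro allI impI)
  fix i assume h: "0 < i \<and> Suc i < length (drop k p)"
  have i0: "0 < i" using h by simp
  have hl: "Suc (k+i) < length p" using h by auto
  have hh: "k < k + i \<and> Suc (k+i) < length p" using i0 hl by simp
  have a: "if collider E p (k+i) then descendants E (p!(k+i)) \<inter> K \<noteq> {} else p!(k+i) \<notin> K"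
    using mp[OF spec[OF assms(1), of "k+i"] hh] .
  have kl: "k \<le> length p" using hl by linarith
  have c1: "collider E (drop k p) i = collider E p (k+i)"
    using collider_drop[OF i0 hl] .
  have c2: "drop k p ! i = p ! (k+i)" using nth_drop[OF kl] .
  show "if collider E (drop k p) i then descendants E (drop k p ! i) \<inter> K \<noteq> {} else drop k p ! i \<notin> K"
    unfolding c1 c2 using a .
qed

lemma active_drop':
  assumes "active_path E K p" "k < length p"
  shows "active_path E K (drop k p)"
  using assms by (intro active_drop) (auto simp: active_path_def)

lemma is_path_Cons:
  assumes "is_path V E p" "x \<in> V" "x \<notin> set p" "adjacent E x (hd p)"
  shows "is_path V E (x # p)"
  unfolding is_path_def
proof (intro conjI allI impI)
  fix i assume h: "Suc i < length (x # p)"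
  show "adjacent E ((x # p) ! i) ((x # p) ! Suc i)"
  proof (cases i)
    case 0 then show ?thesis using assms by (simp add: is_path_def hd_conv_nth)
  next
    case (Suc j) then show ?thesis using assms h by (simp add: is_path_def)
  qed
qed (use assms in \<open>auto simp: is_path_def\<close>)

lemma active_Cons:
  assumes "active_path E K q" "q \<noteq> []" "(x, hd q) \<notin> E" "hd q \<notin> K"
  shows "active_path E K (x # q)"
  unfolding active_path_def
proof (intro allI impI)
  fix i assume h: "0 < i \<and> Suc i < length (x # q)"
  show "if collider E (x # q) i then descendants E ((x # q) ! i) \<inter> K \<noteq> {} else (x # q) ! i \<notin> K"
  proof (cases "i = 1")
    case True
    then have "\<not> collider E (x # q) i" using assms(2,3) by (simp add: collider_def hd_conv_nth)
    then show ?thesis using True assms(2,4) by (simp add: hd_conv_nth)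
  next
    case False
    then obtain j where j: "i = Suc j" "0 < j" using h by (cases i) auto
    then have "Suc j < length q" using h by simp
    then have jj: "0 < j \<and> Suc j < length q" using j by simp
    have a: "if collider E q j then descendants E (q ! j) \<inter> K \<noteq> {} else q ! j \<notin> K"
      using mp[OF spec[OF assms(1)[unfolded active_path_def], of j] jj] .
    have "collider E (x # q) i = collider E q j" using j unfolding collider_def
      by (cases j) auto
    then show ?thesis using a j by simp
  qed
qed

lemma reach_A:
  assumes fin: "finite E" and acy: "acyclic E" and sub: "E \<subseteq> V \<times> V"
    and a1: "is_path V E q0" and a2: "(hd q0, A) \<in> E\<^sup>*" and a3: "descendants E (hd q0) \<inter> K = {}"
    and a4: "active_path E K q0"
  shows "\<exists>q'. is_path V E q' \<and> hd q' = A \<and> last q' = last q0 \<and> active_path E K q'"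
proof -
  have wf: "wf (E\<inverse>)" using finite_acyclic_wf_converse[OF fin acy] .
  have "\<forall>q. hd q = x \<longrightarrow> is_path V E q \<longrightarrow> (x, A) \<in> E\<^sup>* \<longrightarrow> descendants E x \<inter> K = {}
    \<longrightarrow> active_path E K q \<longrightarrow> (\<exists>q'. is_path V E q' \<and> hd q' = A \<and> last q' = last q \<and> active_path E K q')" for x
  proof (induction x rule: wf_induct_rule[OF wf])
    case (1 x)
    show ?case
    proof (intro allI impI)
      fix q assume hq: "hd q = x" "is_path V E q" "(x, A) \<in> E\<^sup>*" "descendants E x \<inter> K = {}" "active_path E K q"
      show "\<exists>q'. is_path V E q' \<and> hd q' = A \<and> last q' = last q \<and> active_path E K q'"
      proof (cases "x = A")
        case True then show ?thesis using hq(1,2,5) by blast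
      next
        case False
        obtain x' where x': "(x, x') \<in> E" "(x', A) \<in> E\<^sup>*"
          using hq(3)
        proof (cases rule: converse_rtranclE)
          case base then show ?thesis using False by simp
        next
          case (step y) then show ?thesis using that by blast
        qed
        have x'V: "x' \<in> V" using x' sub by auto
        have dsub: "descendants E x' \<subseteq> descendants E x" using x' unfolding descendants_def
          by (auto intro: converse_rtrancl_into_rtrancl)
        have dx': "descendants E x' \<inter> K = {}" using dsub hq(4) by blast
        have x'K: "x' \<notin> K" using dx' unfolding descendants_def by auto
        have "(x', x) \<in> E\<inverse>" using x'(1) by simp
        then have IH: "\<forall>q. hd q = x' \<longrightarrow> is_path V E q \<longrightarrow> (x', A) \<in> E\<^sup>* \<longrightarrow> descendants E x' \<inter> K = {}
          \<longrightarrow> active_path E K q \<longrightarrow> (\<exists>q'. is_path V E q' \<and> hd q' = A \<and> last q' = last q \<and> active_path E K q')"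
          by (rule 1)
        have qne: "q \<noteq> []" using hq(2) by (simp add: is_path_def)
        show ?thesis
        proof (cases "x' \<in> set q")
          case True
          then obtain k where k: "k < length q" "q ! k = x'" by (auto simp: in_set_conv_nth)
          have b1: "is_path V E (drop k q)" using is_path_drop[OF hq(2) k(1)] .
          have b2: "hd (drop k q) = x'" using k by (simp add: hd_drop_conv_nth)
          have b3: "active_path E K (drop k q)" using active_drop'[OF hq(5) k(1)] .
          have b4: "last (drop k q) = last q" using k by simp
          show ?thesis using IH[rule_format, OF b2 b1 x'(2) dx' b3] b4 by simp
        next
          case False
          have b1: "is_path V E (x' # q)"
            using is_path_Cons[OF hq(2) x'V False] x' hq(1) by (simp add: adjacent_def)
          have nx: "(x', hd q) \<notin> E"
          proof
            assume "(x', hd q) \<in> E"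
            then have "(x, x) \<in> E\<^sup>+" using x'(1) hq(1) by auto
            then show False using acy by (simp add: acyclic_def)
          qed
          have hqK: "hd q \<notin> K" using hq(1,4) unfolding descendants_def by auto
          have b3: "active_path E K (x' # q)" using active_Cons[OF hq(5) qne nx hqK] .
          have b4: "last (x' # q) = last q" using qne by simp
          have b2: "hd (x' # q) = x'" by simp
          show ?thesis using IH[rule_format, OF b2 b1 x'(2) dx' b3] b4 by simp
        qed
      qed
    qed
  qed
  from this[rule_format, OF refl a1 a2 a3 a4] show ?thesis .
qed

definition adjS :: "'v set \<Rightarrow> ('v \<times> 'v) set \<Rightarrow> 'v \<Rightarrow> ('v \<times> 'v) set" where
  "adjS V E A = {(x, y). adjacent E x y \<and> x \<in> V \<and> y \<in> V \<and> x \<noteq> A \<and> y \<noteq> A}"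

lemma path_adjS:
  assumes "is_path V E p" "A \<notin> set p"
  shows "(hd p, last p) \<in> (adjS V E A)\<^sup>*"
proof -
  have pne: "p \<noteq> []" and pV: "set p \<subseteq> V" and padj: "\<And>i. Suc i < length p \<Longrightarrow> adjacent E (p ! i) (p ! Suc i)"
    using assms(1) by (auto simp: is_path_def)
  have "k < length p \<Longrightarrow> (hd p, p ! k) \<in> (adjS V E A)\<^sup>*" for k
  proof (induction k)
    case 0 then show ?case using pne by (simp add: hd_conv_nth)
  next
    case (Suc k)
    have m1: "p ! k \<in> set p" using Suc.prems by simp
    have m2: "p ! Suc k \<in> set p" using Suc.prems by simp
    have "(p ! k, p ! Suc k) \<in> adjS V E A"
      using padj[OF Suc.prems] m1 m2 pV assms(2) unfolding adjS_def by auto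
    with Suc show ?case by (meson Suc_lessD rtrancl_into_rtrancl)
  qed
  then show ?thesis using pne by (simp add: last_conv_nth)
qed

lemma adjS_path:
  assumes "(x, y) \<in> (adjS V E A)\<^sup>*" "y \<in> V" "y \<noteq> A"
  shows "\<exists>p. is_path V E p \<and> hd p = x \<and> last p = y \<and> A \<notin> set p"
  using assms(1)
proof (induction rule: converse_rtrancl_induct)
  case base
  have "is_path V E [y]" using assms(2) by (simp add: is_path_def)
  then show ?case using assms(3) by auto
next
  case (step x z)
  then obtain p where p: "is_path V E p" "hd p = z" "last p = y" "A \<notin> set p" by blast
  have xz: "adjacent E x z" "x \<in> V" "x \<noteq> A" using step(1) by (auto simp: adjS_def)
  show ?case
  proof (cases "x \<in> set p")
    case True
    then obtain k where k: "k < length p" "p ! k = x" by (metis in_set_conv_nth)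
    have "is_path V E (drop k p)" using is_path_drop[OF p(1) k(1)] .
    moreover have "hd (drop k p) = x" using k by (simp add: hd_drop_conv_nth)
    moreover have "last (drop k p) = y" using k p(3) by simp
    moreover have "A \<notin> set (drop k p)" using p(4) by (meson in_set_dropD)
    ultimately show ?thesis by blast
  next
    case False
    have pne: "p \<noteq> []" using p(1) by (simp add: is_path_def)
    have "is_path V E (x # p)" using is_path_Cons[OF p(1) xz(2) False] xz(1) p(2) by simp
    moreover have "last (x # p) = y" using pne p(3) by simp
    ultimately show ?thesis using xz(3) p(4) by auto
  qed
qed

lemma path_some_active:
  assumes "is_path V E p" "A \<notin> set p"
  shows "\<exists>K. K \<subseteq> V - {A, last p} \<and> active_path E K p"
proof -
  have pne: "p \<noteq> []" and dp: "distinct p" and pV: "set p \<subseteq> V"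
    using assms(1) by (auto simp: is_path_def)
  define K where "K = {p ! t |t. 0 < t \<and> Suc t < length p \<and> collider E p t}"
  have lastp: "last p = p ! (length p - 1)" using pne by (simp add: last_conv_nth)
  have "K \<subseteq> V - {A, last p}"
  proof
    fix v assume "v \<in> K"
    then obtain t where t: "v = p ! t" "0 < t" "Suc t < length p" by (auto simp: K_def)
    have "v \<in> set p" using t by simp
    moreover have "v \<noteq> last p"
    proof
      assume "v = last p"
      then have "p ! t = p ! (length p - 1)" using t lastp by simp
      then have "t = length p - 1" using nth_eq_iff_index_eq[OF dp] t by simp
      then show False using t by simp
    qed
    ultimately show "v \<in> V - {A, last p}" using pV assms(2) by auto
  qed
  moreover have "active_path E K p"
    unfolding active_path_def
  proof (intro allI impI)
    fix i assume i: "0 < i \<and> Suc i < length p"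
    show "if collider E p i then descendants E (p ! i) \<inter> K \<noteq> {} else p ! i \<notin> K"
    proof (cases "collider E p i")
      case True
      then have "p ! i \<in> K" using i by (auto simp: K_def)
      moreover have "p ! i \<in> descendants E (p ! i)" by (simp add: descendants_def)
      ultimately show ?thesis using True by auto
    next
      case False
      have "p ! i \<notin> K"
      proof
        assume "p ! i \<in> K"
        then obtain t where t: "p ! i = p ! t" "0 < t" "Suc t < length p" "collider E p t" by (auto simp: K_def)
        then have "i = t" using nth_eq_iff_index_eq[OF dp] i by simp
        then show False using t False by simp
      qed
      then show ?thesis using False by simp
    qed
  qed
  ultimately show ?thesis by blast
qed

lemma irr_noS:
  assumes "\<forall>K. K \<subseteq> V - {A, Y} \<longrightarrow> d_sep V E {v} {Y} K" "(v, Y) \<in> (adjS V E A)\<^sup>*" "Y \<in> V" "Y \<noteq> A"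
  shows False
proof -
  obtain p where p: "is_path V E p" "hd p = v" "last p = Y" "A \<notin> set p"
    using adjS_path[OF assms(2-4)] by blast
  obtain K where K: "K \<subseteq> V - {A, Y}" "active_path E K p"
    using path_some_active[OF p(1) p(4)] p(3) by blast
  have "d_sep V E {v} {Y} K" using assms(1) K(1) by blast
  then show False using p K unfolding d_sep_def by blast
qed

theorem lemmaB6:
  fixes V :: "'v set" and E :: "('v \<times> 'v) set" and A Y :: 'v
    and I Z U :: "'v set"
  assumes "dag V E"
    and "A \<in> V" and "Y \<in> V" and "A \<noteq> Y" and "(A, Y) \<in> E"
    and "\<forall>v \<in> V - {A, Y}. v \<notin> descendants E A"
    and "I \<subseteq> irrelevant_vars V E A Y"
    and "Z \<subseteq> V - {A, Y}"
    and "U \<subseteq> ext_confounding_vars V E A Y"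
    and "irreducible V E A Y (Z \<union> I) (Z \<union> I \<union> U)"
  shows "d_sep V (edges' E A Y) {A} {Y} (Z \<union> I \<union> U)
       \<and> d_sep V (edges' E A Y) {A} {Y} (Z \<union> U)
       \<and> valid_adj V E A Y (Z \<union> I \<union> U)
       \<and> valid_adj V E A Y (Z \<union> U)
       \<and> d_sep V E I {Y} ({A} \<union> Z \<union> U)
       \<and> d_sep V E I U Z"
proof -
  define E' where "E' = edges' E A Y"
  have E'def: "E' = E - {(A, Y)}" by (simp add: E'_def edges'_def)
  from assms(1) have finV: "finite V" and EV: "E \<subseteq> V \<times> V" and acy: "acyclic E"
    by (auto simp: dag_def)
  have E'E: "E' \<subseteq> E" by (auto simp: E'def)
  have acy': "acyclic E'" using acyclic_subset[OF acy E'E] .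
  have E'V: "E' \<subseteq> V \<times> V" using E'E EV by blast
  have fin': "finite E'" using finite_subset[OF E'V] finV by blast
  have noloop: "\<And>x. (x, x) \<notin> E\<^sup>+" using acy by (simp add: acyclic_def)
  have AE: "\<And>w. (A, w) \<in> E \<Longrightarrow> w = Y"
  proof -
    fix w assume h: "(A, w) \<in> E"
    then have "w \<in> V" using EV by blast
    moreover have "w \<in> descendants E A" using h by (simp add: descendants_def)
    moreover have "w \<noteq> A" using h noloop by blast
    ultimately show "w = Y" using assms(6) by blast
  qed
  have YE: "\<And>w. (Y, w) \<notin> E"
  proof
    fix w assume h: "(Y, w) \<in> E"
    then have "w \<in> V" using EV by blast
    moreover have "(A, w) \<in> E\<^sup>*" using assms(5) h
      by (meson converse_rtrancl_into_rtrancl r_into_rtrancl)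
    then have "w \<in> descendants E A" by (simp add: descendants_def)
    moreover have "w \<noteq> Y" using h noloop by blast
    moreover have "w \<noteq> A"
    proof
      assume "w = A"
      then have "(A, A) \<in> E\<^sup>+" using h assms(5) by (meson r_into_trancl trancl_into_trancl)
      then show False using noloop by blast
    qed
    ultimately show False using assms(6) by blast
  qed
  have descY: "descendants E Y = {Y}"
  proof -
    have "w = Y" if "(Y, w) \<in> E\<^sup>*" for w
      using that by (rule converse_rtranclE) (auto simp: YE)
    then show ?thesis by (auto simp: descendants_def)
  qed
  have descA: "descendants E A \<subseteq> {A, Y}"
  proof
    fix w assume "w \<in> descendants E A"
    then have "(A, w) \<in> E\<^sup>*" by (simp add: descendants_def)
    then show "w \<in> {A, Y}"
    proof (rule converse_rtranclE)
      fix a assume "(A, a) \<in> E" "(a, w) \<in> E\<^sup>*"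
      then have "(Y, w) \<in> E\<^sup>*" using AE by blast
      then have "w \<in> descendants E Y" by (simp add: descendants_def)
      then show "w \<in> {A, Y}" using descY by simp
    qed simp
  qed
  have noutA': "\<And>w. (A, w) \<notin> E'" using AE by (auto simp: E'def)
  have descA': "descendants E' A = {A}"
  proof -
    have "w = A" if "(A, w) \<in> E'\<^sup>*" for w
      using that by (rule converse_rtranclE) (auto simp: noutA')
    then show ?thesis by (auto simp: descendants_def)
  qed
  have F4: "\<And>c w. (c, w) \<in> E\<^sup>* \<Longrightarrow> (c, w) \<in> E'\<^sup>* \<or> w = Y"
  proof -
    fix c w assume "(c, w) \<in> E\<^sup>*"
    then show "(c, w) \<in> E'\<^sup>* \<or> w = Y"
    proof (induction rule: rtrancl_induct)
      case base then show ?case by simp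
    next
      case (step w w')
      show ?case
      proof (cases "w = Y")
        case True then show ?thesis using step(2) YE by blast
      next
        case False
        with step(3) have cw: "(c, w) \<in> E'\<^sup>*" by blast
        show ?thesis
        proof (cases "(w, w') = (A, Y)")
          case True then show ?thesis by simp
        next
          case False
          then have "(w, w') \<in> E'" using step(2) by (simp add: E'def)
          then show ?thesis using cw by (meson rtrancl_into_rtrancl)
        qed
      qed
    qed
  qed
  have Isub: "I \<subseteq> V - {A, Y}" using assms(7) by (auto simp: irrelevant_vars_def)
  have Iirr: "\<And>v K. v \<in> I \<Longrightarrow> K \<subseteq> V - {A, Y} \<Longrightarrow> d_sep V E' {v} {Y} K"
    using assms(7) by (auto simp: irrelevant_vars_def E'_def)
  have Usub: "U \<subseteq> V - {A, Y}" using assms(9) by (auto simp: ext_confounding_vars_def)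
  have ZU: "Z \<union> U \<subseteq> V - {A, Y}" using assms(8) Usub by blast
  have P1: "d_sep V E' {A} {Y} (Z \<union> I \<union> U)"
    using assms(10) by (simp add: irreducible_def valid_adj_def E'_def)
  have P2: "d_sep V E' {A} {Y} (Z \<union> U)"
    unfolding d_sep_def
  proof
    assume "\<exists>p. is_path V E' p \<and> hd p \<in> {A} \<and> last p \<in> {Y} \<and> active_path E' (Z \<union> U) p"
    then obtain p where p: "is_path V E' p" "hd p = A" "last p = Y" "active_path E' (Z \<union> U) p"
      by auto
    show False
    proof (cases "\<exists>s<length p. p ! s \<in> I")
      case True
      then obtain s where s: "s < length p" "p ! s \<in> I" by blast
      have "is_path V E' (drop s p)" using is_path_drop[OF p(1) s(1)] .
      moreover have "hd (drop s p) = p ! s" using s by (simp add: hd_drop_conv_nth)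
      moreover have "last (drop s p) = Y" using s p(3) by simp
      moreover have "active_path E' (Z \<union> U) (drop s p)" using active_drop'[OF p(4) s(1)] .
      ultimately show False using Iirr[OF s(2) ZU] unfolding d_sep_def by blast
    next
      case False
      have "active_path E' (Z \<union> I \<union> U) p"
        unfolding active_path_def
      proof (intro allI impI)
        fix i assume i: "0 < i \<and> Suc i < length p"
        have ni: "p ! i \<notin> I" using False i by auto
        have "if collider E' p i then descendants E' (p ! i) \<inter> (Z \<union> U) \<noteq> {} else p ! i \<notin> Z \<union> U"
          using p(4) i unfolding active_path_def by blast
        then show "if collider E' p i then descendants E' (p ! i) \<inter> (Z \<union> I \<union> U) \<noteq> {} else p ! i \<notin> Z \<union> I \<union> U"
          using ni by (auto split: if_splits)
      qed
      then show False using P1 p unfolding d_sep_def by blast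
    qed
  qed
  have V3: "valid_adj V E A Y (Z \<union> I \<union> U)" using assms(10) by (simp add: irreducible_def)
  have V4: "valid_adj V E A Y (Z \<union> U)" using ZU P2 by (simp add: valid_adj_def E'_def)
  have Pa: "d_sep V E I {Y} ({A} \<union> Z \<union> U)"
    unfolding d_sep_def
  proof
    assume "\<exists>p. is_path V E p \<and> hd p \<in> I \<and> last p \<in> {Y} \<and> active_path E ({A} \<union> Z \<union> U) p"
    then obtain p where p: "is_path V E p" "hd p \<in> I" "last p = Y" "active_path E ({A} \<union> Z \<union> U) p"
      by auto
    have pne: "p \<noteq> []" and dp: "distinct p" and pV: "set p \<subseteq> V"
      and padj: "\<And>i. Suc i < length p \<Longrightarrow> adjacent E (p ! i) (p ! Suc i)"
      using p(1) by (auto simp: is_path_def)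
    have lastY: "p ! (length p - 1) = Y" using p(3) pne by (simp add: last_conv_nth)
    have hd0: "p ! 0 \<in> I" using p(2) pne by (simp add: hd_conv_nth)
    have act: "(if collider E p i then descendants E (p ! i) \<inter> ({A} \<union> Z \<union> U) \<noteq> {} else p ! i \<notin> {A} \<union> Z \<union> U)"
      if "0 < i" "Suc i < length p" for i
    proof -
      have c: "0 < i \<and> Suc i < length p" using that by simp
      show ?thesis using mp[OF spec[OF p(4)[unfolded active_path_def], of i] c] .
    qed
    have notY: "p ! i \<noteq> Y" if "Suc i < length p" for i
    proof
      assume "p ! i = Y"
      then have "p ! i = p ! (length p - 1)" using lastY by simp
      then have "i = length p - 1" using nth_eq_iff_index_eq[OF dp] that by simp
      then show False using that by simp
    qed
    have notA0: "p ! 0 \<noteq> A" using hd0 Isub by auto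
    have Acoll: "collider E p i" if "0 < i" "Suc i < length p" "p ! i = A" for i
    proof (rule ccontr)
      assume "\<not> collider E p i"
      then have "p ! i \<notin> {A} \<union> Z \<union> U" using act[OF that(1,2)] by simp
      with that(3) show False by simp
    qed
    have coll_eq: "collider E' p i = collider E p i" if "0 < i" "Suc i < length p" for i
      using notY[OF that(2)] E'E by (auto simp: collider_def E'def)
    have "adjacent E' (p ! i) (p ! Suc i)" if "Suc i < length p" for i
    proof -
      from padj[OF that] have e: "(p ! i, p ! Suc i) \<in> E \<or> (p ! Suc i, p ! i) \<in> E"
        by (simp add: adjacent_def)
      have n1: "(p ! i, p ! Suc i) \<noteq> (A, Y)"
      proof
        assume eq: "(p ! i, p ! Suc i) = (A, Y)"
        then have i0: "0 < i" using notA0 by (cases i) auto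
        have "collider E p i" using Acoll[OF i0 that] eq by simp
        then have "(p ! Suc i, p ! i) \<in> E" by (simp add: collider_def)
        then show False using eq YE by auto
      qed
      have n2: "(p ! Suc i, p ! i) \<noteq> (A, Y)"
      proof
        assume eq: "(p ! Suc i, p ! i) = (A, Y)"
        have ss: "Suc (Suc i) < length p"
        proof (rule ccontr)
          assume "\<not> Suc (Suc i) < length p"
          then have "Suc i = length p - 1" using that by simp
          then have "p ! Suc i = Y" using lastY by simp
          with eq assms(4) show False by simp
        qed
        have "collider E p (Suc i)" using Acoll[of "Suc i"] ss eq by simp
        then have "(p ! i, p ! Suc i) \<in> E" unfolding collider_def by simp
        then show False using eq YE by auto
      qed
      from e n1 n2 show ?thesis by (auto simp: adjacent_def E'def)
    qed
    then have pathE': "is_path V E' p" using pne dp pV by (simp add: is_path_def)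
    define Cs where "Cs = {t. 0 < t \<and> Suc t < length p \<and> collider E p t \<and> descendants E' (p ! t) \<inter> (Z \<union> U) = {}}"
    show False
    proof (cases "Cs = {}")
      case True
      have "active_path E' (Z \<union> U) p"
        unfolding active_path_def
      proof (intro allI impI)
        fix i assume i: "0 < i \<and> Suc i < length p"
        show "if collider E' p i then descendants E' (p ! i) \<inter> (Z \<union> U) \<noteq> {} else p ! i \<notin> Z \<union> U"
        proof (cases "collider E p i")
          case c: True
          then have "i \<notin> Cs" using True by simp
          then have "descendants E' (p ! i) \<inter> (Z \<union> U) \<noteq> {}" using c i by (simp add: Cs_def)
          then show ?thesis using c coll_eq[of i] i by simp
        next
          case c: False
          then have "p ! i \<notin> {A} \<union> Z \<union> U" using act[of i] i by simp
          then show ?thesis using c coll_eq[of i] i by simp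
        qed
      qed
      then show False using Iirr[OF p(2) ZU] pathE' p(3) unfolding d_sep_def by blast
    next
      case False
      have finCs: "finite Cs" by (rule finite_subset[of _ "{..<length p}"]) (auto simp: Cs_def)
      define t where "t = Max Cs"
      have tC: "t \<in> Cs" using Max_in[OF finCs False] t_def by simp
      have tmax: "\<And>s. s \<in> Cs \<Longrightarrow> s \<le> t" using Max_ge[OF finCs] t_def by simp
      from tC have t0: "0 < t" "Suc t < length p" "collider E p t" "descendants E' (p ! t) \<inter> (Z \<union> U) = {}"
        by (auto simp: Cs_def)
      have tl: "t < length p" using t0 by simp
      have "descendants E (p ! t) \<inter> ({A} \<union> Z \<union> U) \<noteq> {}" using act[OF t0(1,2)] t0(3) by simp
      then obtain w where w: "(p ! t, w) \<in> E\<^sup>*" "w \<in> {A} \<union> Z \<union> U" by (auto simp: descendants_def)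
      have "w \<noteq> Y" using w(2) ZU assms(4) by auto
      then have w': "(p ! t, w) \<in> E'\<^sup>*" using F4[OF w(1)] by simp
      then have "w \<notin> Z \<union> U" using t0(4) by (auto simp: descendants_def)
      with w(2) have "w = A" by simp
      with w' have reachA: "(p ! t, A) \<in> E'\<^sup>*" by simp
      define q where "q = drop t p"
      have q1: "is_path V E' q" using is_path_drop[OF pathE' tl] q_def by simp
      have q2: "hd q = p ! t" using tl by (simp add: q_def hd_drop_conv_nth)
      have q3: "last q = Y" using tl p(3) by (simp add: q_def)
      have q4: "active_path E' (Z \<union> U) q" unfolding q_def
      proof (rule active_drop[OF _ tl], intro allI impI)
        fix s assume s: "t < s \<and> Suc s < length p"
        then have s0: "0 < s" by simp
        show "if collider E' p s then descendants E' (p ! s) \<inter> (Z \<union> U) \<noteq> {} else p ! s \<notin> Z \<union> U"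
        proof (cases "collider E p s")
          case True
          then have "s \<notin> Cs" using tmax s by fastforce
          then have "descendants E' (p ! s) \<inter> (Z \<union> U) \<noteq> {}" using True s s0 by (simp add: Cs_def)
          then show ?thesis using True coll_eq[of s] s s0 by simp
        next
          case False
          then have "p ! s \<notin> {A} \<union> Z \<union> U" using act[of s] s s0 by simp
          then show ?thesis using False coll_eq[of s] s s0 by simp
        qed
      qed
      have r: "(hd q, A) \<in> E'\<^sup>*" using reachA q2 by simp
      have d: "descendants E' (hd q) \<inter> (Z \<union> U) = {}" using t0(4) q2 by simp
      obtain q' where "is_path V E' q'" "hd q' = A" "last q' = last q" "active_path E' (Z \<union> U) q'"
        using reach_A[OF fin' acy' E'V q1 r d q4] by blast
      then show False using P2 q3 unfolding d_sep_def by auto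
    qed
  qed
  have Pb: "d_sep V E I U Z"
    unfolding d_sep_def
  proof
    assume "\<exists>p. is_path V E p \<and> hd p \<in> I \<and> last p \<in> U \<and> active_path E Z p"
    then obtain p where p: "is_path V E p" "hd p \<in> I" "last p \<in> U" "active_path E Z p" by auto
    have pne: "p \<noteq> []" and dp: "distinct p" and pV: "set p \<subseteq> V"
      and padj: "\<And>i. Suc i < length p \<Longrightarrow> adjacent E (p ! i) (p ! Suc i)"
      using p(1) by (auto simp: is_path_def)
    have hd0: "p ! 0 \<in> I" using p(2) pne by (simp add: hd_conv_nth)
    have hlast: "p ! (length p - 1) \<in> U" using p(3) pne by (simp add: last_conv_nth)
    have act: "(if collider E p i then descendants E (p ! i) \<inter> Z \<noteq> {} else p ! i \<notin> Z)"
      if "0 < i" "Suc i < length p" for i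
    proof -
      have c: "0 < i \<and> Suc i < length p" using that by simp
      show ?thesis using mp[OF spec[OF p(4)[unfolded active_path_def], of i] c] .
    qed
    have interior: "0 < s \<and> Suc s < length p" if "s < length p" "p ! s \<in> {A, Y}" for s
    proof -
      have "s \<noteq> 0" using hd0 Isub that(2) by auto
      moreover have "s \<noteq> length p - 1" using hlast Usub that(2) by auto
      ultimately show ?thesis using that(1) by auto
    qed
    have YnotIn: "p ! s \<noteq> Y" if s1: "s < length p" for s
    proof
      assume s2: "p ! s = Y"
      then have si: "0 < s" "Suc s < length p" using interior[OF s1] by auto
      have "adjacent E (p ! (s - 1)) (p ! s)" using padj[of "s - 1"] si by simp
      then have e1: "(p ! (s - 1), p ! s) \<in> E" using s2 YE by (auto simp: adjacent_def)
      have "adjacent E (p ! s) (p ! Suc s)" using padj si by simp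
      then have e2: "(p ! Suc s, p ! s) \<in> E" using s2 YE by (auto simp: adjacent_def)
      from e1 e2 have "collider E p s" by (simp add: collider_def)
      then have "descendants E Y \<inter> Z \<noteq> {}" using act[OF si] s2 by simp
      then show False using descY assms(8) by auto
    qed
    have AnotIn: "A \<notin> set p"
    proof
      assume "A \<in> set p"
      then obtain s where s: "s < length p" "p ! s = A" by (auto simp: in_set_conv_nth)
      then have si: "0 < s" "Suc s < length p" using interior by auto
      have a1: "adjacent E (p ! (s - 1)) (p ! s)" using padj[of "s - 1"] si by simp
      have y1: "p ! (s - 1) \<noteq> Y" using YnotIn[of "s - 1"] si by simp
      have e1: "(p ! (s - 1), p ! s) \<in> E" using a1 y1 s(2) AE by (auto simp: adjacent_def)
      have a2: "adjacent E (p ! s) (p ! Suc s)" using padj si by simp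
      have y2: "p ! Suc s \<noteq> Y" using YnotIn[of "Suc s"] si by simp
      have e2: "(p ! Suc s, p ! s) \<in> E" using a2 y2 s(2) AE by (auto simp: adjacent_def)
      from e1 e2 have "collider E p s" by (simp add: collider_def)
      then have "descendants E A \<inter> Z \<noteq> {}" using act[OF si] s(2) by simp
      then show False using descA assms(8) by auto
    qed
    have "adjacent E' (p ! i) (p ! Suc i)" if "Suc i < length p" for i
    proof -
      have "p ! i \<noteq> A" using AnotIn that by (metis Suc_lessD nth_mem)
      moreover have "p ! Suc i \<noteq> A" using AnotIn that by (metis nth_mem)
      ultimately show ?thesis using padj[OF that] by (auto simp: adjacent_def E'def)
    qed
    then have pathE': "is_path V E' p" using pne dp pV by (simp add: is_path_def)
    have S1: "(hd p, last p) \<in> (adjS V E' A)\<^sup>*" using path_adjS[OF pathE' AnotIn] .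
    obtain L where L: "L \<subseteq> V - {A, Y}" "\<not> d_sep V E' {last p} {Y} L"
      using p(3) assms(9) by (auto simp: ext_confounding_vars_def E'_def)
    then obtain q where q: "is_path V E' q" "hd q = last p" "last q = Y" "active_path E' L q"
      by (auto simp: d_sep_def)
    have AnotInq: "A \<notin> set q"
    proof
      assume "A \<in> set q"
      then obtain s where s: "s < length q" "q ! s = A" by (auto simp: in_set_conv_nth)
      have qne: "q \<noteq> []" and qadj: "\<And>i. Suc i < length q \<Longrightarrow> adjacent E' (q ! i) (q ! Suc i)"
        using q(1) by (auto simp: is_path_def)
      have q0: "q ! 0 = last p" using q(2) qne by (simp add: hd_conv_nth)
      have ql: "q ! (length q - 1) = Y" using q(3) qne by (simp add: last_conv_nth)
      have "s \<noteq> 0" using s q0 p(3) Usub by auto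
      moreover have "s \<noteq> length q - 1" using s ql assms(4) by auto
      ultimately have si: "0 < s" "Suc s < length q" using s(1) by auto
      have "adjacent E' (q ! (s - 1)) (q ! s)" using qadj[of "s - 1"] si by simp
      then have e1: "(q ! (s - 1), q ! s) \<in> E'" using s(2) noutA' by (auto simp: adjacent_def)
      have "adjacent E' (q ! s) (q ! Suc s)" using qadj si by simp
      then have e2: "(q ! Suc s, q ! s) \<in> E'" using s(2) noutA' by (auto simp: adjacent_def)
      from e1 e2 have "collider E' q s" by (simp add: collider_def)
      then have "descendants E' A \<inter> L \<noteq> {}" using q(4) si s(2) by (auto simp: active_path_def)
      then show False using descA' L(1) by auto
    qed
    have S2: "(hd q, last q) \<in> (adjS V E' A)\<^sup>*" using path_adjS[OF q(1) AnotInq] .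
    have "(hd p, Y) \<in> (adjS V E' A)\<^sup>*" using S1 S2 q(2,3) by simp
    moreover have "\<forall>K. K \<subseteq> V - {A, Y} \<longrightarrow> d_sep V E' {hd p} {Y} K" using Iirr[OF p(2)] by blast
    ultimately show False using irr_noS[of V A Y E' "hd p"] assms(3,4) by blast
  qed
  show ?thesis using P1 P2 V3 V4 Pa Pb by (simp add: E'_def)
qed

end
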